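(* Let $0<\varpi<2$, $0\le\beta_e\le1$ and $\epsilon>0$. Let $X$ be binary with distribution $(p,1-p)$, $p\in[0,1/2]$, and $Y$ the output of the binary erasure channel $p(y\mid x)=\begin{pmatrix}1-\beta_e&0&\beta_e\\ 0&1-\beta_e&\beta_e\end{pmatrix}$. Consider $$\max_{p\in[0,1/2]} I(X;Y)\quad\text{subject to}\quad L(\varpi,X)-L(\varpi,X\mid Y)\le\epsilon.$$ Let $C_{\beta_e}=(1-\beta_e)(e^{\varpi/2}-1)$. Then the optimal value equals $1-\beta_e$ if $\epsilon\ge C_{\beta_e}$, and equals $(1-\beta_e)H(p_e)$ if $0<\epsilon\le C_{\beta_e}$, where $p_e\in[0,1/2]$ is the solution of $(1-\beta_e)\big(pe^{\varpi(1-p)}+(1-p)e^{\varpi p}-1\big)=\epsilon$.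
   Context: MIM: $L(\varpi,X)=\sum_i p(x_i)e^{\varpi(1-p(x_i))}$. CMIM: $L(\varpi,X\mid Y)=\sum_{j:\,p(y_j)>0}p(y_j)\sum_i p(x_i\mid y_j)e^{\varpi(1-p(x_i\mid y_j))}$, where the joint law is $p(x_i)p(y_j\mid x_i)$ and $p(x_i\mid y_j)=p(x_i)p(y_j\mid x_i)/p(y_j)$. $I(X;Y)$ denotes mutual information in bits, and $H(q)=-q\log_2 q-(1-q)\log_2(1-q)$ is the binary entropy function. *)

theory Defs
  imports Complex_Main
begin

text \<open>Generic finite-alphabet notions. An input law is px on a finite alphabet A,
a channel is W x y = p(y|x) with output alphabet B.\<close>

definition out_prob :: "('x \<Rightarrow> real) \<Rightarrow> ('x \<Rightarrow> 'y \<Rightarrow> real) \<Rightarrow> 'x set \<Rightarrow> 'y \<Rightarrow> real" where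
  "out_prob px W A y = (\<Sum>x\<in>A. px x * W x y)"

definition MIM :: "real \<Rightarrow> ('x \<Rightarrow> real) \<Rightarrow> 'x set \<Rightarrow> real" where
  "MIM w px A = (\<Sum>x\<in>A. px x * exp (w * (1 - px x)))"

definition CMIM :: "real \<Rightarrow> ('x \<Rightarrow> real) \<Rightarrow> ('x \<Rightarrow> 'y \<Rightarrow> real) \<Rightarrow> 'x set \<Rightarrow> 'y set \<Rightarrow> real" where
  "CMIM w px W A B =
     (\<Sum>y\<in>{y\<in>B. out_prob px W A y > 0}.
        out_prob px W A y *
        (\<Sum>x\<in>A. (px x * W x y / out_prob px W A y) *
                  exp (w * (1 - px x * W x y / out_prob px W A y))))"

definition mutual_info :: "('x \<Rightarrow> real) \<Rightarrow> ('x \<Rightarrow> 'y \<Rightarrow> real) \<Rightarrow> 'x set \<Rightarrow> 'y set \<Rightarrow> real" where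
  "mutual_info px W A B =
     (\<Sum>x\<in>A. \<Sum>y\<in>B. if px x * W x y > 0
        then px x * W x y * log 2 (px x * W x y / (px x * out_prob px W A y)) else 0)"

definition xlog2 :: "real \<Rightarrow> real" where
  "xlog2 q = (if q = 0 then 0 else q * log 2 q)"

definition bin_entropy :: "real \<Rightarrow> real" where
  "bin_entropy q = - xlog2 q - xlog2 (1 - q)"

text \<open>Binary input X in {0,1} with P(X=0) = p, and binary erasure channel with
outputs {0,1,2}, 2 being the erasure symbol.\<close>
definition bin_law :: "real \<Rightarrow> nat \<Rightarrow> real" where
  "bin_law p x = (if x = 0 then p else 1 - p)"

definition bec :: "real \<Rightarrow> nat \<Rightarrow> nat \<Rightarrow> real" where
  "bec b x y = (if y = 2 then b else if y = x then 1 - b else 0)"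

definition is_max_value :: "('a \<Rightarrow> real) \<Rightarrow> 'a set \<Rightarrow> real \<Rightarrow> bool" where
  "is_max_value f S v \<longleftrightarrow> (\<exists>s\<in>S. f s = v) \<and> (\<forall>s\<in>S. f s \<le> v)"

end

theory Submission imports Defs begin

definition gg :: "real \<Rightarrow> real \<Rightarrow> real" where
  "gg w p = p * exp (w * (1 - p)) + (1 - p) * exp (w * p) - 1"

lemma sum3: "(\<Sum>y\<in>{0,1,2::nat}. f y) = f 0 + f 1 + f 2"
  by (simp add: add.assoc)

lemma sum2: "(\<Sum>y\<in>{0,1::nat}. f y) = f 0 + f 1"
  by simp

lemma aux_inv: "(x::real) \<noteq> 0 \<Longrightarrow> y \<noteq> 0 \<Longrightarrow> y * x / (y * (y * x)) = inverse y"
  by (simp add: field_simps)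

lemma diff_eq:
  assumes "0 \<le> p" "p \<le> 1" "0 \<le> b" "b \<le> 1"
  shows "MIM w (bin_law p) {0, 1} - CMIM w (bin_law p) (bec b) {0, 1} {0, 1, 2} = (1 - b) * gg w p"
proof -
  let ?L = "p * exp (w * (1 - p)) + (1 - p) * exp (w * p)"
  have M: "MIM w (bin_law p) {0, 1} = ?L"
    by (simp add: MIM_def bin_law_def)
  have o0: "out_prob (bin_law p) (bec b) {0,1} 0 = p * (1 - b)"
    by (simp add: out_prob_def bin_law_def bec_def)
  have o1: "out_prob (bin_law p) (bec b) {0,1} 1 = (1 - p) * (1 - b)"
    by (simp add: out_prob_def bin_law_def bec_def)
  have o2: "out_prob (bin_law p) (bec b) {0,1} 2 = b"
    by (simp add: out_prob_def bin_law_def bec_def algebra_simps)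
  define T where "T y = out_prob (bin_law p) (bec b) {0,1} y *
        (\<Sum>x\<in>{0,1}. (bin_law p x * bec b x y / out_prob (bin_law p) (bec b) {0,1} y) *
                  exp (w * (1 - bin_law p x * bec b x y / out_prob (bin_law p) (bec b) {0,1} y)))" for y
  have C: "CMIM w (bin_law p) (bec b) {0, 1} {0, 1, 2} =
      (\<Sum>y\<in>{0,1,2}. if out_prob (bin_law p) (bec b) {0,1} y > 0 then T y else 0)"
    unfolding CMIM_def T_def by (rule sum.inter_filter) simp
  have t0: "(if out_prob (bin_law p) (bec b) {0,1} 0 > 0 then T 0 else 0) = p * (1 - b)"
    unfolding T_def o0 using assms by (auto simp: bin_law_def bec_def zero_less_mult_iff)
  have t1: "(if out_prob (bin_law p) (bec b) {0,1} 1 > 0 then T 1 else 0) = (1 - p) * (1 - b)"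
    unfolding T_def o1 using assms by (auto simp: bin_law_def bec_def zero_less_mult_iff)
  have t2: "(if out_prob (bin_law p) (bec b) {0,1} 2 > 0 then T 2 else 0) = b * ?L"
    unfolding T_def o2 using assms by (auto simp: bin_law_def bec_def algebra_simps)
  have "CMIM w (bin_law p) (bec b) {0, 1} {0, 1, 2} = p * (1 - b) + (1 - p) * (1 - b) + b * ?L"
    unfolding C sum3 t0 t1 t2 by simp
  then show ?thesis unfolding M gg_def by (simp add: algebra_simps)
qed

lemma mi_eq:
  assumes "0 \<le> p" "p \<le> 1" "0 \<le> b" "b \<le> 1"
  shows "mutual_info (bin_law p) (bec b) {0, 1} {0, 1, 2} = (1 - b) * bin_entropy p"
proof -
  have o0: "out_prob (bin_law p) (bec b) {0,1} 0 = p * (1 - b)"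
    by (simp add: out_prob_def bin_law_def bec_def)
  have o1: "out_prob (bin_law p) (bec b) {0,1} 1 = (1 - p) * (1 - b)"
    by (simp add: out_prob_def bin_law_def bec_def)
  have o2: "out_prob (bin_law p) (bec b) {0,1} 2 = b"
    by (simp add: out_prob_def bin_law_def bec_def algebra_simps)
  have a: "(if p * (1 - b) > 0 then p * (1 - b) * log 2 (p * (1 - b) / (p * (p * (1 - b)))) else 0)
     = - (1 - b) * xlog2 p"
  proof (cases "p * (1 - b) > 0")
    case True
    then have "p > 0" "1 - b > 0" using assms by (auto simp: zero_less_mult_iff)
    then have "p * (1 - b) / (p * (p * (1 - b))) = inverse p" by (simp add: field_simps)
    then show ?thesis using True \<open>p > 0\<close> by (simp add: log_inverse xlog2_def algebra_simps)
  next
    case False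
    then have "p = 0 \<or> b = 1" using assms by (auto simp: zero_less_mult_iff)
    then show ?thesis using False by (auto simp: xlog2_def)
  qed
  have c: "(if (1 - p) * (1 - b) > 0 then (1 - p) * (1 - b) * log 2 ((1 - p) * (1 - b) / ((1 - p) * ((1 - p) * (1 - b)))) else 0)
     = - (1 - b) * xlog2 (1 - p)"
  proof (cases "(1 - p) * (1 - b) > 0")
    case True
    then have "1 - p > 0" "1 - b > 0" using assms by (auto simp: zero_less_mult_iff)
    then have "(1 - p) * (1 - b) / ((1 - p) * ((1 - p) * (1 - b))) = inverse (1 - p)"
      by (intro aux_inv) auto
    then show ?thesis using True \<open>1 - p > 0\<close> by (simp add: log_inverse xlog2_def algebra_simps)
  next
    case False
    then have "p = 1 \<or> b = 1" using assms by (auto simp: zero_less_mult_iff)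
    then show ?thesis
    proof
      assume "p = 1" then show ?thesis by (simp add: xlog2_def)
    next
      assume "b = 1" then show ?thesis by (simp add: xlog2_def)
    qed
  qed
  have d: "(if p * b > 0 then p * b * log 2 (p * b / (p * b)) else 0) = 0" by simp
  have e: "(if (1 - p) * b > 0 then (1 - p) * b * log 2 ((1 - p) * b / ((1 - p) * b)) else 0) = 0" by simp
  have bl: "bin_law p 0 = p" "bin_law p 1 = 1 - p" by (simp_all add: bin_law_def)
  have bc: "bec b 0 0 = 1 - b" "bec b 0 1 = 0" "bec b 0 2 = b" "bec b 1 0 = 0" "bec b 1 1 = 1 - b" "bec b 1 2 = b"
    by (simp_all add: bec_def)
  have z: "(if (0::real) > 0 then t else 0) = 0" for t :: real by simp
  show ?thesis
    unfolding mutual_info_def bin_entropy_def sum2 sum3 o0 o1 o2 bl bc mult_zero_right z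
    using a c d e by (simp add: algebra_simps)
qed

definition phi :: "real \<Rightarrow> real \<Rightarrow> real" where
  "phi w t = (1 - w * t) * exp (w * (1 - t))"

lemma phi_dec:
  assumes "0 < w" "w < 2" "0 \<le> s" "s < t" "t \<le> 1"
  shows "phi w t < phi w s"
proof (rule DERIV_neg_imp_decreasing[OF \<open>s < t\<close>])
  fix x assume x: "s \<le> x" "x \<le> t"
  have d: "DERIV (phi w) x :> (- w) * exp (w * (1 - x)) + (1 - w * x) * (exp (w * (1 - x)) * (- w))"
    unfolding phi_def by (auto intro!: derivative_eq_intros)
  have "w * x \<le> w * 1" using x assms by (intro mult_left_mono) auto
  then have "w * x < 2" using assms by linarith
  then have "(- w) * exp (w * (1 - x)) + (1 - w * x) * (exp (w * (1 - x)) * (- w)) = - (w * exp (w * (1 - x)) * (2 - w * x))"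
    by (simp add: algebra_simps)
  moreover have "w * exp (w * (1 - x)) * (2 - w * x) > 0" using \<open>w * x < 2\<close> assms by simp
  ultimately show "\<exists>y. DERIV (phi w) x :> y \<and> y < 0" using d by auto
qed

lemma gg_deriv: "DERIV (gg w) x :> phi w x - phi w (1 - x)"
proof -
  have "DERIV (gg w) x :> (exp (w * (1 - x)) + x * (exp (w * (1 - x)) * (- w))) + ((- 1) * exp (w * x) + (1 - x) * (exp (w * x) * w))"
    unfolding gg_def by (auto intro!: derivative_eq_intros)
  moreover have "(exp (w * (1 - x)) + x * (exp (w * (1 - x)) * (- w))) + ((- 1) * exp (w * x) + (1 - x) * (exp (w * x) * w)) = phi w x - phi w (1 - x)"
    unfolding phi_def by (simp add: algebra_simps)
  ultimately show ?thesis by simp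
qed

lemma gg_strict:
  assumes "0 < w" "w < 2" "0 \<le> a" "a < c" "c \<le> 1/2"
  shows "gg w a < gg w c"
proof (rule DERIV_pos_imp_increasing_open[OF \<open>a < c\<close>])
  fix x assume x: "a < x" "x < c"
  have "phi w (1 - x) < phi w x" using x assms by (intro phi_dec) auto
  then show "\<exists>y. DERIV (gg w) x :> y \<and> y > 0" using gg_deriv[of w x] by (intro exI[of _ "phi w x - phi w (1 - x)"]) auto
next
  show "continuous_on {a..c} (gg w)"
    using gg_deriv by (meson DERIV_isCont continuous_at_imp_continuous_on)
qed

definition Hf :: "real \<Rightarrow> real" where
  "Hf x = - (x * log 2 x) - (1 - x) * log 2 (1 - x)"

lemma Hf_deriv:
  assumes "0 < x" "x < 1"
  shows "DERIV Hf x :> log 2 (1 - x) - log 2 x"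
proof -
  have "DERIV Hf x :> - (1 * log 2 x + x * (1 / (ln 2 * x))) - ((- 1) * log 2 (1 - x) + (1 - x) * ((- 1) / (ln 2 * (1 - x))))"
    unfolding Hf_def using assms by (auto intro!: derivative_eq_intros)
  moreover have "- (1 * log 2 x + x * (1 / (ln 2 * x))) - ((- 1) * log 2 (1 - x) + (1 - x) * ((- 1) / (ln 2 * (1 - x)))) = log 2 (1 - x) - log 2 x"
    using assms by (simp add: field_simps)
  ultimately show ?thesis by simp
qed

lemma Hf_mono:
  assumes "0 < p" "p \<le> q" "q \<le> 1/2"
  shows "Hf p \<le> Hf q"
proof (rule DERIV_nonneg_imp_increasing_open[OF \<open>p \<le> q\<close>])
  fix x assume x: "p < x" "x < q"
  have "log 2 x \<le> log 2 (1 - x)" using x assms by simp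
  then show "\<exists>y. DERIV Hf x :> y \<and> y \<ge> 0" using Hf_deriv[of x] x assms by auto
next
  have "\<forall>x\<in>{p..q}. isCont Hf x"
  proof
    fix x assume "x \<in> {p..q}"
    then have "0 < x" "x < 1" using assms by auto
    then show "isCont Hf x" using Hf_deriv DERIV_isCont by blast
  qed
  then show "continuous_on {p..q} Hf" by (simp add: continuous_at_imp_continuous_on)
qed

lemma bin_entropy_Hf: "0 < x \<Longrightarrow> x < 1 \<Longrightarrow> bin_entropy x = Hf x"
  by (simp add: bin_entropy_def xlog2_def Hf_def)

lemma xlog2_nonpos: "0 \<le> x \<Longrightarrow> x \<le> 1 \<Longrightarrow> xlog2 x \<le> 0"
  by (auto simp: xlog2_def mult_nonneg_nonpos)

lemma bin_entropy_nonneg: "0 \<le> x \<Longrightarrow> x \<le> 1 \<Longrightarrow> bin_entropy x \<ge> 0"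
  using xlog2_nonpos[of x] xlog2_nonpos[of "1 - x"] by (simp add: bin_entropy_def)

lemma bin_entropy_mono:
  assumes "0 \<le> p" "p \<le> q" "q \<le> 1/2"
  shows "bin_entropy p \<le> bin_entropy q"
proof (cases "p = 0")
  case True
  then show ?thesis using bin_entropy_nonneg[of q] assms by (simp add: bin_entropy_def xlog2_def)
next
  case False
  then show ?thesis using Hf_mono[of p q] assms bin_entropy_Hf[of p] bin_entropy_Hf[of q] by auto
qed

lemma bin_entropy_half: "bin_entropy (1/2) = 1"
  by (simp add: bin_entropy_def xlog2_def log_divide)


theorem proposition6:
  fixes w b \<epsilon> :: real
  assumes "0 < w" "w < 2" "0 \<le> b" "b \<le> 1" "0 < \<epsilon>"
  defines "I \<equiv> (\<lambda>p. mutual_info (bin_law p) (bec b) {0, 1} {0, 1, 2})"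
    and "F \<equiv> {p \<in> {0..1/2}.
               MIM w (bin_law p) {0, 1} - CMIM w (bin_law p) (bec b) {0, 1} {0, 1, 2} \<le> \<epsilon>}"
    and "C \<equiv> (1 - b) * (exp (w / 2) - 1)"
  shows "(\<epsilon> \<ge> C \<longrightarrow> is_max_value I F (1 - b)) \<and>
         (\<epsilon> \<le> C \<longrightarrow>
            (\<exists>pe\<in>{0..1/2}. (1 - b) * (pe * exp (w * (1 - pe)) + (1 - pe) * exp (w * pe) - 1) = \<epsilon>) \<and>
            (\<forall>pe\<in>{0..1/2}. (1 - b) * (pe * exp (w * (1 - pe)) + (1 - pe) * exp (w * pe) - 1) = \<epsilon> \<longrightarrow>
               is_max_value I F ((1 - b) * bin_entropy pe)))"
proof -
  have Ieq: "I p = (1 - b) * bin_entropy p" if "p \<in> {0..1/2}" for p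
    unfolding I_def using that assms by (intro mi_eq) auto
  have Feq: "F = {p \<in> {0..1/2}. (1 - b) * gg w p \<le> \<epsilon>}"
    unfolding F_def using diff_eq assms by auto
  have gmono: "gg w p \<le> gg w q" if "0 \<le> p" "p \<le> q" "q \<le> 1/2" for p q
    using gg_strict[of w p q] that assms by (cases "p = q") auto
  have ggh: "gg w (1/2) = exp (w / 2) - 1" by (simp add: gg_def)
  have gg0: "gg w 0 = 0" by (simp add: gg_def)
  have part1: "is_max_value I F (1 - b)" if "\<epsilon> \<ge> C"
    unfolding is_max_value_def
  proof
    have "1/2 \<in> F" unfolding Feq using that ggh C_def by simp
    then show "\<exists>s\<in>F. I s = 1 - b" using Ieq[of "1/2"] bin_entropy_half by (intro bexI[of _ "1/2"]) auto
  next
    show "\<forall>s\<in>F. I s \<le> 1 - b"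
    proof
      fix s assume "s \<in> F"
      then have s: "0 \<le> s" "s \<le> 1/2" unfolding Feq by auto
      have "bin_entropy s \<le> 1" using bin_entropy_mono[of s "1/2"] s bin_entropy_half by simp
      then have "(1 - b) * bin_entropy s \<le> (1 - b) * 1" using assms by (intro mult_left_mono) auto
      then show "I s \<le> 1 - b" using Ieq s by simp
    qed
  qed
  have part2: "(\<exists>pe\<in>{0..1/2}. (1 - b) * (pe * exp (w * (1 - pe)) + (1 - pe) * exp (w * pe) - 1) = \<epsilon>) \<and>
            (\<forall>pe\<in>{0..1/2}. (1 - b) * (pe * exp (w * (1 - pe)) + (1 - pe) * exp (w * pe) - 1) = \<epsilon> \<longrightarrow>
               is_max_value I F ((1 - b) * bin_entropy pe))" if "\<epsilon> \<le> C"
  proof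
    have b1: "b < 1"
    proof (rule ccontr)
      assume "\<not> b < 1" then have "b = 1" using assms by simp
      then show False using that assms C_def by simp
    qed
    let ?f = "\<lambda>p. (1 - b) * gg w p"
    have "\<exists>x. 0 \<le> x \<and> x \<le> 1/2 \<and> ?f x = \<epsilon>"
    proof (rule IVT)
      show "?f 0 \<le> \<epsilon>" using gg0 assms by simp
      show "\<epsilon> \<le> ?f (1/2)" using ggh that C_def by simp
      show "(0::real) \<le> 1/2" by simp
      show "\<forall>x. 0 \<le> x \<and> x \<le> 1 / 2 \<longrightarrow> isCont ?f x"
        using gg_deriv DERIV_isCont continuous_const continuous_mult by blast
    qed
    then show "\<exists>pe\<in>{0..1/2}. (1 - b) * (pe * exp (w * (1 - pe)) + (1 - pe) * exp (w * pe) - 1) = \<epsilon>"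
      by (auto simp: gg_def)
    show "\<forall>pe\<in>{0..1/2}. (1 - b) * (pe * exp (w * (1 - pe)) + (1 - pe) * exp (w * pe) - 1) = \<epsilon> \<longrightarrow>
               is_max_value I F ((1 - b) * bin_entropy pe)"
    proof (intro ballI impI)
      fix pe assume pe: "pe \<in> {0..1/2}" and "(1 - b) * (pe * exp (w * (1 - pe)) + (1 - pe) * exp (w * pe) - 1) = \<epsilon>"
      then have fpe: "?f pe = \<epsilon>" by (simp add: gg_def)
      show "is_max_value I F ((1 - b) * bin_entropy pe)"
        unfolding is_max_value_def
      proof
        have "pe \<in> F" unfolding Feq using pe fpe by simp
        then show "\<exists>s\<in>F. I s = (1 - b) * bin_entropy pe" using Ieq pe by auto
      next
        show "\<forall>s\<in>F. I s \<le> (1 - b) * bin_entropy pe"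
        proof
          fix s assume "s \<in> F"
          then have s: "0 \<le> s" "s \<le> 1/2" "?f s \<le> \<epsilon>" unfolding Feq by auto
          have "gg w s \<le> gg w pe" using s(3) fpe b1 mult_le_cancel_left_pos[of "1 - b" "gg w s" "gg w pe"] by simp
          then have "s \<le> pe" using gg_strict[of w pe s] assms s pe by force
          then have "bin_entropy s \<le> bin_entropy pe" using bin_entropy_mono s pe by auto
          then have "(1 - b) * bin_entropy s \<le> (1 - b) * bin_entropy pe" using assms by (intro mult_left_mono) auto
          then show "I s \<le> (1 - b) * bin_entropy pe" using Ieq s by simp
        qed
      qed
    qed
  qed
  show ?thesis using part1 part2 by blast
qed

end
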